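(* There exist real numbers $F_0,F_1,\dots,F_{2n}$ such that for every density operator $\rho$ on $\mathcal{H}_n\otimes\mathcal{H}_n$ whose range is contained in $\mathcal{K}$ (in particular $\mathrm{Tr}\rho=1$), $$\sum_{a\in\{0,1\}^{2n},\,|a|=k}\rho_{aa}=F_k\qquad k=0,1,\dots,2n.$$
   Context: $\mathcal{H}_n$ is the Fock space of $n$ fermionic modes with Majorana operators $c_1,\dots,c_{2n}$ ($c_{2j-1}=a_j+a_j^\dagger$, $c_{2j}=-i(a_j-a_j^\dagger)$). For $x\in\{0,1\}^{2n}$ let $c(x)=c_1^{x_1}\cdots c_{2n}^{x_{2n}}$ and $|x|$ its Hamming weight. Every operator $\rho$ on $\mathcal{H}_n\otimes\mathcal{H}_n$ (ordinary tensor product) expands uniquely as $\rho=\sum_{a,b\in\{0,1\}^{2n}}\rho_{ab}\,c(a)\otimes c(b)$ with $\rho_{ab}=2^{-2n}\mathrm{Tr}(\rho\,c(a)\otimes c(b))$. Let $\Lambda=\sum_{p=1}^{2n}c_p\otimes c_p$ and $\mathcal{K}=\ker\Lambda$. *)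

theory Defs
  imports Complex_Main "Jordan_Normal_Form.Matrix"
begin

text \<open>Fock space of n fermionic modes: C^(2^n), basis vector |s> for s < 2^n, where
  the occupation number of mode j (0-indexed) is bit j of s.\<close>

definition mtrace :: "complex mat \<Rightarrow> complex" where
  "mtrace A = (\<Sum>i<dim_row A. A $$ (i, i))"

definition occ :: "nat \<Rightarrow> nat \<Rightarrow> bool" where
  "occ s j = odd (s div 2 ^ j)"

text \<open>Annihilation operator a_j (Jordan-Wigner sign convention):
  a_j |s> = (-1)^(number of occupied modes i < j) |s - e_j> if mode j occupied, else 0.\<close>
definition annih :: "nat \<Rightarrow> nat \<Rightarrow> complex mat" where
  "annih n j = mat (2 ^ n) (2 ^ n) (\<lambda>(r, s).
     if occ s j \<and> r = s - 2 ^ j then (-1) ^ card {i. i < j \<and> occ s i} else 0)"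

definition adj :: "complex mat \<Rightarrow> complex mat" where
  "adj A = mat (dim_col A) (dim_row A) (\<lambda>(i, j). cnj (A $$ (j, i)))"

text \<open>Majorana operators, 0-indexed p < 2n: c_(2j) = a_j + a_j^dag, c_(2j+1) = -i (a_j - a_j^dag)
  (these are the paper's c_(2j-1), c_(2j) for mode j+1).\<close>
definition majorana :: "nat \<Rightarrow> nat \<Rightarrow> complex mat" where
  "majorana n p = (let j = p div 2 in
     if even p then annih n j + adj (annih n j)
     else (- \<i>) \<cdot>\<^sub>m (annih n j - adj (annih n j)))"

definition cmono :: "nat \<Rightarrow> bool list \<Rightarrow> complex mat" where
  "cmono n x = foldr (\<lambda>p M. (if x ! p then majorana n p else 1\<^sub>m (2 ^ n)) * M)
                 [0..<2 * n] (1\<^sub>m (2 ^ n))"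

definition hamming :: "bool list \<Rightarrow> nat" where
  "hamming x = count_list x True"

definition kron :: "complex mat \<Rightarrow> complex mat \<Rightarrow> complex mat" where
  "kron A B = mat (dim_row A * dim_row B) (dim_col A * dim_col B)
     (\<lambda>(i, j). A $$ (i div dim_row B, j div dim_col B) * B $$ (i mod dim_row B, j mod dim_col B))"

definition Lambda :: "nat \<Rightarrow> complex mat" where
  "Lambda n = foldr (\<lambda>p M. kron (majorana n p) (majorana n p) + M) [0..<2 * n] (0\<^sub>m (4 ^ n) (4 ^ n))"

definition rho_coeff :: "nat \<Rightarrow> complex mat \<Rightarrow> bool list \<Rightarrow> bool list \<Rightarrow> complex" where
  "rho_coeff n \<rho> a b = mtrace (\<rho> * kron (cmono n a) (cmono n b)) / 2 ^ (2 * n)"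

definition density_op :: "nat \<Rightarrow> complex mat \<Rightarrow> bool" where
  "density_op N \<rho> \<longleftrightarrow> \<rho> \<in> carrier_mat N N \<and> adj \<rho> = \<rho> \<and>
     (\<forall>v \<in> carrier_vec N. let q = (\<Sum>i<N. cnj (v $ i) * (\<rho> *\<^sub>v v) $ i) in Im q = 0 \<and> Re q \<ge> 0) \<and>
     mtrace \<rho> = 1"

definition range_op :: "nat \<Rightarrow> complex mat \<Rightarrow> complex vec set" where
  "range_op N A = {A *\<^sub>v v | v. v \<in> carrier_vec N}"

definition kernel_op :: "nat \<Rightarrow> complex mat \<Rightarrow> complex vec set" where
  "kernel_op N A = {v \<in> carrier_vec N. A *\<^sub>v v = 0\<^sub>v (dim_row A)}"

end

theory Submission
  imports Defs
begin

fun Sm :: "nat \<Rightarrow> (nat \<Rightarrow> complex mat) \<Rightarrow> nat \<Rightarrow> nat \<Rightarrow> complex mat" where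
  "Sm D Z 0 k = (if k = 0 then 1\<^sub>m D else 0\<^sub>m D D)"
| "Sm D Z (Suc m) k = (if k = 0 then Sm D Z m 0 else Sm D Z m k + Sm D Z m (k - 1) * Z m)"

fun Pm :: "nat \<Rightarrow> (nat \<Rightarrow> complex mat) \<Rightarrow> nat \<Rightarrow> complex mat" where
  "Pm D Z 0 = 0\<^sub>m D D"
| "Pm D Z (Suc m) = Pm D Z m + Z m"

fun fco :: "nat \<Rightarrow> nat \<Rightarrow> real" where
  "fco m 0 = 1"
| "fco m (Suc 0) = 0"
| "fco m (Suc (Suc k)) = (real_of_int (int k - int m) / real (k + 2)) * fco m k"

locale cinv =
  fixes D :: nat and Z :: "nat \<Rightarrow> complex mat"
  assumes Zc[simp]: "Z p \<in> carrier_mat D D"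
  and Zcomm: "Z p * Z q = Z q * Z p"
  and Zsq: "Z p * Z p = 1\<^sub>m D"
begin

lemma Zdim[simp]: "dim_row (Z p) = D" "dim_col (Z p) = D"
  using Zc[of p] unfolding carrier_mat_def by auto

lemma Sc[simp]: "Sm D Z m k \<in> carrier_mat D D"
  by (induction m arbitrary: k) (auto intro!: add_carrier_mat mult_carrier_mat)

lemma Sdim[simp]: "dim_row (Sm D Z m k) = D" "dim_col (Sm D Z m k) = D"
  using Sc[of m k] unfolding carrier_mat_def by auto

lemma Pc[simp]: "Pm D Z m \<in> carrier_mat D D"
  by (induction m) auto

lemma Pdim[simp]: "dim_row (Pm D Z m) = D" "dim_col (Pm D Z m) = D"
  using Pc[of m] unfolding carrier_mat_def by auto

lemma S0[simp]: "Sm D Z m 0 = 1\<^sub>m D"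
  by (induction m) auto

lemma S_comm: "Z q * Sm D Z m k = Sm D Z m k * Z q"
proof (induction m arbitrary: k)
  case 0 then show ?case by (auto simp: left_mult_one_mat right_mult_one_mat)
next
  case (Suc m)
  show ?case
  proof (cases "k = 0")
    case True then show ?thesis by simp
  next
    case False
    have "Z q * (Sm D Z m k + Sm D Z m (k - 1) * Z m) = Z q * Sm D Z m k + Z q * (Sm D Z m (k - 1) * Z m)"
      by (rule mult_add_distrib_mat[of _ D D]) auto
    also have "Z q * (Sm D Z m (k - 1) * Z m) = (Z q * Sm D Z m (k - 1)) * Z m"
      by (rule assoc_mult_mat[symmetric, of _ D D _ D _ D]) auto
    also have "\<dots> = Sm D Z m (k - 1) * (Z q * Z m)"
      using Suc.IH by (simp add: assoc_mult_mat[of _ D D _ D _ D])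
    also have "\<dots> = (Sm D Z m (k - 1) * Z m) * Z q"
      using Zcomm[of q m] by (simp add: assoc_mult_mat[of _ D D _ D _ D])
    also have "Z q * Sm D Z m k + Sm D Z m (k - 1) * Z m * Z q
      = (Sm D Z m k + Sm D Z m (k - 1) * Z m) * Z q"
      unfolding Suc.IH
      by (rule add_mult_distrib_mat[symmetric, of _ D D]) auto
    finally show ?thesis using False Suc.IH by simp
  qed
qed

lemma P_comm: assumes "M \<in> carrier_mat D D" "\<And>q. Z q * M = M * Z q"
  shows "Pm D Z m * M = M * Pm D Z m"
proof (induction m)
  case 0 then show ?case using assms by auto
next
  case (Suc m)
  then show ?case using assms
    by (simp add: add_mult_distrib_mat[of _ D D _ _ D] mult_add_distrib_mat[of _ D D _ D])
qed

lemma S1: "Sm D Z m (Suc 0) = Pm D Z m"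
  by (induction m) (auto simp: left_mult_one_mat)

lemma eqD: "(\<And>i j. i < D \<Longrightarrow> j < D \<Longrightarrow> A $$ (i,j) = B $$ (i,j)) \<Longrightarrow>
   A \<in> carrier_mat D D \<Longrightarrow> B \<in> carrier_mat D D \<Longrightarrow> A = B"
  by (rule eq_matI) auto

lemma ZP_comm: "Z q * Pm D Z m = Pm D Z m * Z q"
  using P_comm[of "Z q" m] Zcomm by auto

lemma PS_comm: "Pm D Z m * Sm D Z m' k = Sm D Z m' k * Pm D Z m"
  using P_comm[of "Sm D Z m' k" m] S_comm by auto

lemma rec: "of_nat (k+2) \<cdot>\<^sub>m Sm D Z m (k+2) =
   Pm D Z m * Sm D Z m (k+1) + (of_int (int k - int m)) \<cdot>\<^sub>m Sm D Z m k"
proof (induction m arbitrary: k)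
  case 0
  show ?case by (rule eq_matI) auto
next
  case (Suc m)
  define P where "P = Pm D Z m"
  define z where "z = Z m"
  define S where "S = Sm D Z m"
  have [simp]: "P \<in> carrier_mat D D" "z \<in> carrier_mat D D" "\<And>j. S j \<in> carrier_mat D D"
    unfolding P_def z_def S_def by auto
  have [simp]: "dim_row P = D" "dim_col P = D" "dim_row z = D" "dim_col z = D"
     "\<And>j. dim_row (S j) = D" "\<And>j. dim_col (S j) = D"
    unfolding P_def z_def S_def by auto
  have zS: "z * S j = S j * z" for j unfolding z_def S_def using S_comm by auto
  have zz: "z * z = 1\<^sub>m D" unfolding z_def using Zsq by auto
  have zSz: "z * (S j * z) = S j" for j
  proof -
    have "z * (S j * z) = (z * S j) * z" by (rule assoc_mult_mat[symmetric, of _ D D _ D _ D]) auto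
    also have "\<dots> = S j * (z * z)" unfolding zS by (rule assoc_mult_mat[of _ D D _ D _ D]) auto
    finally show ?thesis unfolding zz by simp
  qed
  have PSz: "P * (S j * z) = (P * S j) * z" for j by (rule assoc_mult_mat[symmetric, of _ D D _ D _ D]) auto
  have zP: "z * P = P * z" unfolding z_def P_def using ZP_comm by auto
  have S1': "S 1 = P" unfolding S_def P_def using S1 by simp
  have S0': "S 0 = 1\<^sub>m D" unfolding S_def by simp
  show ?case
  proof (cases k)
    case 0
    have IH: "2 \<cdot>\<^sub>m S 2 = P * S 1 + (- of_nat m) \<cdot>\<^sub>m S 0"
      using Suc.IH[of 0] unfolding S_def P_def by (simp add: numeral_2_eq_2)
    have L: "Sm D Z (Suc m) (k+2) = S 2 + P * z" using 0 S1' unfolding S_def z_def by (simp add: numeral_2_eq_2)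
    have R1: "Sm D Z (Suc m) (k+1) = P + z" using 0 S1' S0' unfolding S_def z_def by simp
    have R0: "Sm D Z (Suc m) k = 1\<^sub>m D" using 0 by simp
    have E: "(P + z) * (P + z) = P * P + P * z + (z * P + z * z)"
      by (simp add: add_mult_distrib_mat[of P D D z "P+z" D] mult_add_distrib_mat[of P D D P D z]
          mult_add_distrib_mat[of z D D P D z])
    have IHe: "2 * S 2 $$ (i,j) = (P * S 1) $$ (i,j) - of_nat m * S 0 $$ (i,j)" if "i < D" "j < D" for i j
      using arg_cong[OF IH, of "\<lambda>M. M $$ (i,j)"] that by simp
    have "of_nat (k + 2) \<cdot>\<^sub>m (S 2 + P * z) =
        (P + z) * (P + z) + of_int (int k - int (Suc m)) \<cdot>\<^sub>m 1\<^sub>m D"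
    proof (rule eqD)
      fix i j assume ij': "i < D" "j < D"
      have E2: "((P + z) * (P + z)) $$ (i,j) = (P * P) $$ (i,j) + 2 * (P * z) $$ (i,j) + 1\<^sub>m D $$ (i,j)"
        unfolding E zz zP using ij' by simp
      show "(of_nat (k + 2) \<cdot>\<^sub>m (S 2 + P * z)) $$ (i, j) =
        ((P + z) * (P + z) + of_int (int k - int (Suc m)) \<cdot>\<^sub>m 1\<^sub>m D) $$ (i, j)"
        using E2 IHe[OF ij'] ij' 0 unfolding S0' S1' by (simp add: algebra_simps)
    qed auto
    then show ?thesis
      unfolding L R1 R0 Pm.simps P_def[symmetric] z_def[symmetric] by simp
  next
    case (Suc k')
    have IH1: "of_nat (k+2) \<cdot>\<^sub>m S (k+2) = P * S (k+1) + (of_int (int k - int m)) \<cdot>\<^sub>m S k"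
      using Suc.IH[of k] unfolding S_def P_def by simp
    have IH2: "of_nat (k'+2) \<cdot>\<^sub>m S (k'+2) = P * S (k'+1) + (of_int (int k' - int m)) \<cdot>\<^sub>m S k'"
      using Suc.IH[of k'] unfolding S_def P_def by simp
    have IH2z: "(of_nat (k'+2) \<cdot>\<^sub>m S (k'+2)) * z = (P * S (k'+1) + (of_int (int k' - int m)) \<cdot>\<^sub>m S k') * z"
      unfolding IH2 ..
    have A1: "(of_nat (k'+2) \<cdot>\<^sub>m S (k'+2)) * z = of_nat (k'+2) \<cdot>\<^sub>m (S (k'+2) * z)"
      by (rule mult_smult_assoc_mat[of _ D D]) auto
    have A2: "(P * S (k'+1) + (of_int (int k' - int m)) \<cdot>\<^sub>m S k') * z
       = P * (S (k'+1) * z) + (of_int (int k' - int m)) \<cdot>\<^sub>m (S k' * z)"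
    proof -
      have "(P * S (k'+1) + (of_int (int k' - int m)) \<cdot>\<^sub>m S k') * z
        = (P * S (k'+1)) * z + ((of_int (int k' - int m)) \<cdot>\<^sub>m S k') * z"
        by (rule add_mult_distrib_mat[of _ D D]) auto
      also have "(P * S (k'+1)) * z = P * (S (k'+1) * z)"
        by (rule assoc_mult_mat[of _ D D _ D _ D]) auto
      also have "((of_int (int k' - int m)) \<cdot>\<^sub>m S k') * z = (of_int (int k' - int m)) \<cdot>\<^sub>m (S k' * z)"
        by (rule mult_smult_assoc_mat[of _ D D]) auto
      finally show ?thesis .
    qed
    have E: "(P + z) * (S (k+1) + S k * z) = P * S (k+1) + P * (S k * z) + (z * S (k+1) + z * (S k * z))"
    proof -
      have e1: "(P + z) * (S (k+1) + S k * z) = P * (S (k+1) + S k * z) + z * (S (k+1) + S k * z)"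
        by (rule add_mult_distrib_mat[of _ D D]) auto
      have e2: "P * (S (k+1) + S k * z) = P * S (k+1) + P * (S k * z)"
        by (rule mult_add_distrib_mat[of _ D D]) auto
      have e3: "z * (S (k+1) + S k * z) = z * S (k+1) + z * (S k * z)"
        by (rule mult_add_distrib_mat[of _ D D]) auto
      show ?thesis unfolding e1 e2 e3 ..
    qed
    have L: "Sm D Z (Suc m) (k+2) = S (k+2) + S (k+1) * z" unfolding S_def z_def by simp
    have R1: "Sm D Z (Suc m) (k+1) = S (k+1) + S k * z" unfolding S_def z_def by simp
    have R0: "Sm D Z (Suc m) k = S k + S k' * z" using Suc unfolding S_def z_def by simp
    have "of_nat (k + 2) \<cdot>\<^sub>m (S (k+2) + S (k+1) * z) =
        (P + z) * (S (k+1) + S k * z) + of_int (int k - int (Suc m)) \<cdot>\<^sub>m (S k + S k' * z)"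
    proof (rule eqD)
      fix i j assume ij': "i < D" "j < D"
      have E2: "((P + z) * (S (k+1) + S k * z)) $$ (i,j) = (P * S (k+1)) $$ (i,j) + (P * (S k * z)) $$ (i,j)
         + (S (k+1) * z) $$ (i,j) + S k $$ (i,j)"
        unfolding E zS zSz using ij' by (simp del: index_mult_mat(1))
      have h1: "of_nat (k+2) * S (k+2) $$ (i,j) = (P * S (k+1)) $$ (i,j) + of_int (int k - int m) * S k $$ (i,j)"
        using arg_cong[OF IH1, of "\<lambda>M. M $$ (i,j)"] ij' by (simp del: index_mult_mat(1))
      have h2: "of_nat (k'+2) * (S (k'+2) * z) $$ (i,j) = (P * (S (k'+1) * z)) $$ (i,j)
          + of_int (int k' - int m) * (S k' * z) $$ (i,j)"
        using arg_cong[OF IH2z[unfolded A1 A2], of "\<lambda>M. M $$ (i,j)"] ij' by (simp del: index_mult_mat(1))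
      show "(of_nat (k + 2) \<cdot>\<^sub>m (S (k+2) + S (k+1) * z)) $$ (i, j) =
        ((P + z) * (S (k+1) + S k * z) + of_int (int k - int (Suc m)) \<cdot>\<^sub>m (S k + S k' * z)) $$ (i, j)"
        proof -
        have h1': "(P * S (k+1)) $$ (i,j) = of_nat (k+2) * S (k+2) $$ (i,j) - of_int (int k - int m) * S k $$ (i,j)"
          using h1 by (simp add: algebra_simps)
        have h2': "(P * (S (k'+1) * z)) $$ (i,j) = of_nat (k'+2) * (S (k'+2) * z) $$ (i,j)
          - of_int (int k' - int m) * (S k' * z) $$ (i,j)"
          using h2 by (simp add: algebra_simps)
        have kk: "k'+1 = k" "k'+2 = k+1" using Suc by auto
        show ?thesis using E2 h1' h2'[unfolded kk] ij'
          apply (simp del: index_mult_mat(1))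
          apply (simp add: algebra_simps Suc del: index_mult_mat(1))
          done
      qed
    qed auto
    then show ?thesis
      unfolding L R1 R0 Pm.simps P_def[symmetric] z_def[symmetric] by simp
  qed
qed


lemma kernel_S:
  assumes M: "M \<in> carrier_mat D D" and PM: "Pm D Z m * M = 0\<^sub>m D D"
  shows "Sm D Z m k * M = complex_of_real (fco m k) \<cdot>\<^sub>m M"
proof (induction k rule: nat_induct2)
  case 0 then show ?case using M by (simp, intro eq_matI, auto)
next
  case 1
  then show ?case using M PM S1 by (simp, intro eq_matI, auto)
next
  case (step k)
  define P where "P = Pm D Z m"
  define S where "S = Sm D Z m"
  have [simp]: "P \<in> carrier_mat D D" "\<And>j. S j \<in> carrier_mat D D"
    unfolding P_def S_def by auto
  have [simp]: "dim_row P = D" "dim_col P = D" "dim_row M = D" "dim_col M = D"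
     "\<And>j. dim_row (S j) = D" "\<And>j. dim_col (S j) = D"
    unfolding P_def S_def using M by auto
  have R: "(of_nat (k+2) \<cdot>\<^sub>m S (k+2)) * M = (P * S (k+1) + (of_int (int k - int m)) \<cdot>\<^sub>m S k) * M"
    using rec[of k m] unfolding S_def P_def by simp
  have a1: "(of_nat (k+2) \<cdot>\<^sub>m S (k+2)) * M = of_nat (k+2) \<cdot>\<^sub>m (S (k+2) * M)"
    by (rule mult_smult_assoc_mat[of _ D D]) auto
  have a2: "(P * S (k+1) + (of_int (int k - int m)) \<cdot>\<^sub>m S k) * M
      = (P * S (k+1)) * M + ((of_int (int k - int m)) \<cdot>\<^sub>m S k) * M"
    by (rule add_mult_distrib_mat[of _ D D]) auto
  have a3: "((of_int (int k - int m)) \<cdot>\<^sub>m S k) * M = (of_int (int k - int m)) \<cdot>\<^sub>m (S k * M)"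
    by (rule mult_smult_assoc_mat[of _ D D]) auto
  have a4: "(P * S (k+1)) * M = 0\<^sub>m D D"
  proof -
    have "(P * S (k+1)) * M = (S (k+1) * P) * M" unfolding P_def S_def using PS_comm by simp
    also have "\<dots> = S (k+1) * (P * M)" by (rule assoc_mult_mat[of _ D D _ D _ D]) auto
    also have "\<dots> = 0\<^sub>m D D" using PM unfolding P_def by simp
    finally show ?thesis .
  qed
  have IH: "S k * M = complex_of_real (fco m k) \<cdot>\<^sub>m M" using step unfolding S_def by simp
  have E: "of_nat (k+2) \<cdot>\<^sub>m (S (k+2) * M) = 0\<^sub>m D D + (of_int (int k - int m)) \<cdot>\<^sub>m (complex_of_real (fco m k) \<cdot>\<^sub>m M)"
    using R unfolding a1 a2 a3 a4 IH .
  have "S (k+2) * M = complex_of_real (fco m (k+2)) \<cdot>\<^sub>m M"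
  proof (rule eqD)
    fix i j assume ij: "i < D" "j < D"
    have eq1: "of_nat (k+2) * (S (k+2) * M) $$ (i,j) = of_int (int k - int m) * (complex_of_real (fco m k) * M $$ (i,j))"
      using arg_cong[OF E, of "\<lambda>A. A $$ (i,j)"] ij by (simp del: index_mult_mat(1))
    have gen: "\<And>x y (a::complex). a \<noteq> 0 \<Longrightarrow> a * x = y \<Longrightarrow> x = y / a" by (simp add: field_simps)
    have nz: "(of_nat (k+2)::complex) \<noteq> 0" by (simp only: of_nat_eq_0_iff)
    from gen[OF nz eq1] have "(S (k+2) * M) $$ (i,j) = of_int (int k - int m) * (complex_of_real (fco m k) * M $$ (i,j)) / of_nat (k+2)"
      by (simp del: index_mult_mat(1) of_nat_add)
    then show "(S (k+2) * M) $$ (i,j) = (complex_of_real (fco m (k+2)) \<cdot>\<^sub>m M) $$ (i,j)"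
      using ij by (simp add: field_simps numeral_2_eq_2 del: index_mult_mat(1))
  qed auto
  then show ?case unfolding S_def by (simp add: numeral_2_eq_2)
qed

end

definition sp :: "nat \<Rightarrow> (nat \<Rightarrow> nat) \<Rightarrow> (nat \<Rightarrow> complex) \<Rightarrow> complex mat" where
  "sp N f w = mat N N (\<lambda>(r, s). if r = f s then w s else 0)"

lemma sp_carrier[simp]: "sp N f w \<in> carrier_mat N N"
  by (simp add: sp_def)

lemma sp_dim[simp]: "dim_row (sp N f w) = N" "dim_col (sp N f w) = N"
  by (simp_all add: sp_def)

lemma sp_index[simp]: "r < N \<Longrightarrow> s < N \<Longrightarrow> sp N f w $$ (r,s) = (if r = f s then w s else 0)"
  by (simp add: sp_def)

lemma sp_mult: assumes g: "\<And>s. s < N \<Longrightarrow> g s < N"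
  shows "sp N f w * sp N g u = sp N (f \<circ> g) (\<lambda>s. w (g s) * u s)"
proof (rule eq_matI)
  fix i j assume ij: "i < dim_row (sp N (f \<circ> g) (\<lambda>s. w (g s) * u s))" "j < dim_col (sp N (f \<circ> g) (\<lambda>s. w (g s) * u s))"
  then have i: "i < N" and j: "j < N" by auto
  have "(sp N f w * sp N g u) $$ (i,j) = (\<Sum>l\<in>{0..<N}. (if i = f l then w l else 0) * (if l = g j then u j else 0))"
    using i j by (simp add: scalar_prod_def)
  also have "\<dots> = (\<Sum>l\<in>{0..<N}. if l = g j then (if i = f l then w l else 0) * u j else 0)"
    by (rule sum.cong) auto
  also have "\<dots> = (if i = f (g j) then w (g j) else 0) * u j"
    using g[OF j] by simp
  finally show "(sp N f w * sp N g u) $$ (i,j) = sp N (f \<circ> g) (\<lambda>s. w (g s) * u s) $$ (i,j)"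
    using i j by simp
qed auto

lemma sp_eq: "(\<And>s. s < N \<Longrightarrow> f s = g s) \<Longrightarrow> (\<And>s. s < N \<Longrightarrow> w s = u s) \<Longrightarrow> sp N f w = sp N g u"
  by (rule eq_matI) auto

lemma sp_smult: "c \<cdot>\<^sub>m sp N f w = sp N f (\<lambda>s. c * w s)"
  by (rule eq_matI) auto

lemma sp_one: "sp N (\<lambda>s. s) (\<lambda>_. 1) = 1\<^sub>m N"
  by (rule eq_matI) auto

definition sig :: "nat \<Rightarrow> nat \<Rightarrow> complex" where
  "sig j s = (-1) ^ card {i. i < j \<and> bit s i}"

definition wm :: "nat \<Rightarrow> nat \<Rightarrow> complex" where
  "wm p s = (if even p then sig (p div 2) s else - \<i> * sig (p div 2) s * (if bit s (p div 2) then 1 else -1))"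

lemma bit_flip: "bit (flip_bit k s) i = (if i = k then \<not> bit (s::nat) i else bit s i)"
  by (auto simp: bit_flip_bit_iff)

lemma flip_flip[simp]: "flip_bit k (flip_bit k (s::nat)) = s"
  by (rule bit_eqI) (auto simp: bit_flip)

lemma flip_comm: "flip_bit k (flip_bit j (s::nat)) = flip_bit j (flip_bit k s)"
  by (rule bit_eqI) (auto simp: bit_flip)

lemma sig_flip: "sig j (flip_bit k s) = (if k < j then -1 else 1) * sig j s"
proof (cases "k < j")
  case False
  have "{i. i < j \<and> bit (flip_bit k s) i} = {i. i < j \<and> bit s i}"
    using False by (auto simp: bit_flip)
  then show ?thesis using False by (simp add: sig_def)
next
  case True
  define A where "A = {i. i < j \<and> bit s i}"
  define A' where "A' = {i. i < j \<and> bit (flip_bit k s) i}"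
  have fA: "finite A" "finite A'" unfolding A_def A'_def by auto
  show ?thesis
  proof (cases "bit s k")
    case b: True
    have "A = insert k A'" "k \<notin> A'" unfolding A_def A'_def using True b by (auto simp: bit_flip)
    then have "card A = Suc (card A')" using fA by simp
    then show ?thesis using True unfolding sig_def A_def[symmetric] A'_def[symmetric] by simp
  next
    case b: False
    have "A' = insert k A" "k \<notin> A" unfolding A_def A'_def using True b by (auto simp: bit_flip)
    then have "card A' = Suc (card A)" using fA by simp
    then show ?thesis using True unfolding sig_def A_def[symmetric] A'_def[symmetric] by simp
  qed
qed

lemma wm_flip: "wm p (flip_bit k s) = (if k = p div 2 then (if even p then 1 else -1)
   else if k < p div 2 then -1 else 1) * wm p s"
  by (auto simp: wm_def sig_flip bit_flip)

lemma sig_sq: "sig j s * sig j s = 1"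
  by (simp add: sig_def flip: power_add)

lemma wm_sq: "wm p (flip_bit (p div 2) s) * wm p s = 1"
proof -
  have "wm p s * wm p s = (if even p then 1 else -1)"
    using sig_sq[of "p div 2" s] by (auto simp: wm_def algebra_simps)
  then show ?thesis by (simp add: wm_flip)
qed

lemma wm_anti: assumes "p \<noteq> q"
  shows "wm p (flip_bit (q div 2) s) * wm q s = - (wm q (flip_bit (p div 2) s) * wm p s)"
proof (cases "p div 2 = q div 2")
  case True
  then have "even p \<noteq> even q" using assms
    by (metis dvd_mult_div_cancel odd_two_times_div_two_succ)
  then show ?thesis using True by (auto simp: wm_flip)
next
  case False
  then show ?thesis by (auto simp: wm_flip)
qed

lemma occ_bit: "occ s i = bit s i"
  by (simp add: occ_def bit_iff_odd)

lemma flip_bit_less: assumes "s < 2 ^ n" "j < n" shows "flip_bit j (s::nat) < 2 ^ n"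
proof -
  have "take_bit n s = s" using assms by (simp add: take_bit_nat_eq_self_iff)
  then have "take_bit n (flip_bit j s) = flip_bit j s"
    using assms by (simp add: take_bit_flip_bit_eq)
  then show ?thesis by (simp add: take_bit_nat_eq_self_iff)
qed

lemma flip_bit_val: "flip_bit j (s::nat) = (if bit s j then s - 2 ^ j else s + 2 ^ j)"
proof (cases "bit s j")
  case True
  define t where "t = flip_bit j s"
  have "\<not> bit t j" unfolding t_def using True by (simp add: bit_flip)
  then have "set_bit j t = t + 2 ^ j" by (simp add: set_bit_eq)
  moreover have "set_bit j t = s" unfolding t_def using True
    by (intro bit_eqI) (auto simp: bit_flip bit_set_bit_iff)
  ultimately show ?thesis using True unfolding t_def by simp
next
  case False
  then show ?thesis by (simp add: flip_bit_eq_if set_bit_eq)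
qed


lemma annih_dim[simp]: "dim_row (annih n j) = 2 ^ n" "dim_col (annih n j) = 2 ^ n"
  by (simp_all add: annih_def)

lemma adj_dim[simp]: "dim_row (adj A) = dim_col A" "dim_col (adj A) = dim_row A"
  by (simp_all add: adj_def)

lemma annih_index: "r < 2 ^ n \<Longrightarrow> s < 2 ^ n \<Longrightarrow>
   annih n j $$ (r,s) = (if bit s j \<and> r = flip_bit j s then sig j s else 0)"
  by (simp add: annih_def occ_bit sig_def flip_bit_val)

lemma adj_annih_index: assumes "r < 2 ^ n" "s < 2 ^ n"
  shows "adj (annih n j) $$ (r,s) = (if \<not> bit s j \<and> r = flip_bit j s then sig j s else 0)"
proof -
  have e: "(bit r j \<and> s = flip_bit j r) = (\<not> bit s j \<and> r = flip_bit j s)"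
    by (auto simp: bit_flip)
  have "adj (annih n j) $$ (r,s) = cnj (annih n j $$ (s,r))" using assms by (simp add: adj_def)
  also have "\<dots> = cnj (if \<not> bit s j \<and> r = flip_bit j s then sig j r else 0)"
    using assms by (simp add: annih_index e)
  also have "\<dots> = (if \<not> bit s j \<and> r = flip_bit j s then sig j s else 0)"
    by (auto simp: sig_flip) (simp add: sig_def)
  finally show ?thesis .
qed

lemma majorana_sp: assumes "p < 2 * n"
  shows "majorana n p = sp (2 ^ n) (flip_bit (p div 2)) (wm p)"
proof (rule eq_matI)
  fix r s assume "r < dim_row (sp (2 ^ n) (flip_bit (p div 2)) (wm p))" "s < dim_col (sp (2 ^ n) (flip_bit (p div 2)) (wm p))"
  then have r: "r < 2 ^ n" and s: "s < 2 ^ n" by auto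
  show "majorana n p $$ (r, s) = sp (2 ^ n) (flip_bit (p div 2)) (wm p) $$ (r, s)"
    using r s by (auto simp: majorana_def Let_def annih_index adj_annih_index wm_def)
qed (auto simp: majorana_def Let_def)

lemma sum_divmod:
  fixes g :: "nat \<Rightarrow> nat \<Rightarrow> 'a::comm_monoid_add"
  shows "(\<Sum>l\<in>{0..<a*b}. g (l div b) (l mod b)) = (\<Sum>x\<in>{0..<a}. \<Sum>y\<in>{0..<b}. g x y)"
proof (induction a)
  case 0 then show ?case by simp
next
  case (Suc a)
  have "(\<Sum>l\<in>{0..<Suc a*b}. g (l div b) (l mod b)) =
    (\<Sum>l\<in>{0..<a*b}. g (l div b) (l mod b)) + (\<Sum>l\<in>{a*b..<a*b+b}. g (l div b) (l mod b))"
    by (subst sum.atLeastLessThan_concat[symmetric, of _ "a*b"]) (auto simp: add.commute)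
  also have "(\<Sum>l\<in>{a*b..<a*b+b}. g (l div b) (l mod b)) = (\<Sum>y\<in>{0..<b}. g ((y + a*b) div b) ((y+a*b) mod b))"
    using sum.shift_bounds_nat_ivl[of "\<lambda>l. g (l div b) (l mod b)" 0 "a*b" b] by (simp add: add.commute)
  also have "\<dots> = (\<Sum>y\<in>{0..<b}. g a y)"
    by (rule sum.cong) auto
  finally show ?case using Suc by simp
qed

lemma maj_sq: assumes "p < 2 * n" shows "majorana n p * majorana n p = 1\<^sub>m (2 ^ n)"
proof -
  have j: "p div 2 < n" using assms by auto
  have "majorana n p * majorana n p = sp (2 ^ n) (flip_bit (p div 2) \<circ> flip_bit (p div 2))
      (\<lambda>s. wm p (flip_bit (p div 2) s) * wm p s)"
    unfolding majorana_sp[OF assms] by (rule sp_mult) (simp add: flip_bit_less j)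
  also have "\<dots> = sp (2 ^ n) (\<lambda>s. s) (\<lambda>_. 1)"
    by (rule sp_eq) (auto simp: wm_sq)
  finally show ?thesis by (simp add: sp_one)
qed

lemma maj_anti: assumes "p < 2 * n" "q < 2 * n" "p \<noteq> q"
  shows "majorana n p * majorana n q = (-1) \<cdot>\<^sub>m (majorana n q * majorana n p)"
proof -
  have j: "p div 2 < n" "q div 2 < n" using assms by auto
  have "majorana n p * majorana n q = sp (2 ^ n) (flip_bit (p div 2) \<circ> flip_bit (q div 2))
      (\<lambda>s. wm p (flip_bit (q div 2) s) * wm q s)"
    unfolding majorana_sp[OF assms(1)] majorana_sp[OF assms(2)] by (rule sp_mult) (simp add: flip_bit_less j)
  also have "\<dots> = sp (2 ^ n) (flip_bit (q div 2) \<circ> flip_bit (p div 2))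
      (\<lambda>s. -1 * (wm q (flip_bit (p div 2) s) * wm p s))"
    by (rule sp_eq) (auto simp: wm_anti[OF assms(3)] flip_comm)
  also have "\<dots> = (-1) \<cdot>\<^sub>m (majorana n q * majorana n p)"
    unfolding majorana_sp[OF assms(1)] majorana_sp[OF assms(2)] sp_smult[symmetric]
    by (subst sp_mult) (auto simp: flip_bit_less j)
  finally show ?thesis .
qed

lemma majorana_carrier[simp]: "p < 2 * n \<Longrightarrow> majorana n p \<in> carrier_mat (2 ^ n) (2 ^ n)"
  by (simp add: majorana_sp)

lemma kron_carrier[simp]: "A \<in> carrier_mat N N \<Longrightarrow> B \<in> carrier_mat N N \<Longrightarrow> kron A B \<in> carrier_mat (N*N) (N*N)"
  by (auto simp: kron_def)

lemma kron_mult: assumes "A \<in> carrier_mat N N" "B \<in> carrier_mat N N" "C \<in> carrier_mat N N" "E \<in> carrier_mat N N"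
  shows "kron A C * kron B E = kron (A * B) (C * E)"
proof (rule eq_matI)
  fix i j assume "i < dim_row (kron (A * B) (C * E))" "j < dim_col (kron (A * B) (C * E))"
  then have i: "i < N * N" and j: "j < N * N" using assms by (auto simp: kron_def)
  then have N: "N > 0" by (cases N) auto
  have id: "i div N < N" "j div N < N" "i mod N < N" "j mod N < N"
    using i j N by (auto simp: less_mult_imp_div_less)
  have "(kron A C * kron B E) $$ (i,j) = (\<Sum>l\<in>{0..<N*N}. (A $$ (i div N, l div N) * C $$ (i mod N, l mod N)) *
      (B $$ (l div N, j div N) * E $$ (l mod N, j mod N)))"
    using i j assms by (auto simp: kron_def scalar_prod_def intro!: sum.cong)
  also have "\<dots> = (\<Sum>x\<in>{0..<N}. \<Sum>y\<in>{0..<N}. (A $$ (i div N, x) * C $$ (i mod N, y)) *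
      (B $$ (x, j div N) * E $$ (y, j mod N)))"
    by (rule sum_divmod[of "\<lambda>x y. (A $$ (i div N, x) * C $$ (i mod N, y)) * (B $$ (x, j div N) * E $$ (y, j mod N))"])
  also have "\<dots> = (\<Sum>x\<in>{0..<N}. A $$ (i div N, x) * B $$ (x, j div N)) * (\<Sum>y\<in>{0..<N}. C $$ (i mod N, y) * E $$ (y, j mod N))"
    by (simp add: sum_product algebra_simps)
  also have "\<dots> = kron (A * B) (C * E) $$ (i,j)"
    using i j id assms by (auto simp: kron_def scalar_prod_def)
  finally show "(kron A C * kron B E) $$ (i,j) = kron (A * B) (C * E) $$ (i,j)" .
qed (use assms in \<open>auto simp: kron_def\<close>)

lemma kron_smult: assumes "A \<in> carrier_mat N N" "B \<in> carrier_mat N N"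
  shows "kron (a \<cdot>\<^sub>m A) (b \<cdot>\<^sub>m B) = (a * b) \<cdot>\<^sub>m kron A B"
proof (rule eq_matI)
  fix i j assume "i < dim_row ((a * b) \<cdot>\<^sub>m kron A B)" "j < dim_col ((a * b) \<cdot>\<^sub>m kron A B)"
  then have i: "i < N * N" and j: "j < N * N" using assms by (auto simp: kron_def)
  then have N: "N > 0" by (cases N) auto
  have id: "i div N < N" "j div N < N" "i mod N < N" "j mod N < N"
    using i j N by (auto simp: less_mult_imp_div_less)
  show "kron (a \<cdot>\<^sub>m A) (b \<cdot>\<^sub>m B) $$ (i, j) = ((a * b) \<cdot>\<^sub>m kron A B) $$ (i, j)"
    using i j id assms by (auto simp: kron_def)
qed (use assms in \<open>auto simp: kron_def\<close>)

lemma kron_one: "kron (1\<^sub>m N) (1\<^sub>m N) = 1\<^sub>m (N * N)"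
proof (rule eq_matI)
  fix i j assume "i < dim_row (1\<^sub>m (N * N))" "j < dim_col (1\<^sub>m (N * N))"
  then have i: "i < N * N" and j: "j < N * N" by auto
  then have N: "N > 0" by (cases N) auto
  have id: "i div N < N" "j div N < N" "i mod N < N" "j mod N < N"
    using i j N by (auto simp: less_mult_imp_div_less)
  have "(i div N = j div N \<and> i mod N = j mod N) = (i = j)"
    by (metis div_mult_mod_eq)
  then show "kron (1\<^sub>m N) (1\<^sub>m N) $$ (i, j) = 1\<^sub>m (N * N) $$ (i, j)"
    using i j id by (auto simp: kron_def)
qed (auto simp: kron_def)

definition Zf :: "nat \<Rightarrow> nat \<Rightarrow> complex mat" where
  "Zf n p = (if p < 2 * n then kron (majorana n p) (majorana n p) else 1\<^sub>m (2 ^ n * 2 ^ n))"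

lemma Zf_carrier[simp]: "Zf n p \<in> carrier_mat (2 ^ n * 2 ^ n) (2 ^ n * 2 ^ n)"
  by (simp add: Zf_def)

lemma one_smult_mat: "(1::complex) \<cdot>\<^sub>m A = A"
  by (rule eq_matI) auto

lemma Zf_in: "p < 2 * n \<Longrightarrow> Zf n p = kron (majorana n p) (majorana n p)"
  by (simp add: Zf_def)

lemma Zf_sq: "Zf n p * Zf n p = 1\<^sub>m (2 ^ n * 2 ^ n)"
proof (cases "p < 2 * n")
  case True
  have "Zf n p * Zf n p = kron (majorana n p * majorana n p) (majorana n p * majorana n p)"
    unfolding Zf_in[OF True] using True by (intro kron_mult[of _ "2^n"]) auto
  then show ?thesis using True by (simp add: maj_sq kron_one)
next
  case False then show ?thesis by (simp add: Zf_def)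
qed

lemma Zf_comm: "Zf n p * Zf n q = Zf n q * Zf n p"
proof (cases "p < 2 * n \<and> q < 2 * n \<and> p \<noteq> q")
  case True
  then have hp: "p < 2 * n" and hq: "q < 2 * n" by auto
  have "Zf n p * Zf n q = kron (majorana n p * majorana n q) (majorana n p * majorana n q)"
    unfolding Zf_in[OF hp] Zf_in[OF hq] using hp hq by (intro kron_mult[of _ "2^n"]) auto
  also have "\<dots> = kron ((-1) \<cdot>\<^sub>m (majorana n q * majorana n p)) ((-1) \<cdot>\<^sub>m (majorana n q * majorana n p))"
    using True by (simp only: maj_anti[OF hp hq, of, OF conjunct2[OF conjunct2[OF True]]])
  also have "\<dots> = ((-1) * (-1)) \<cdot>\<^sub>m kron (majorana n q * majorana n p) (majorana n q * majorana n p)"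
    by (rule kron_smult[of _ "2^n"]) (use hp hq in \<open>auto intro!: mult_carrier_mat[of _ "2^n" "2^n"]\<close>)
  also have "\<dots> = kron (majorana n q * majorana n p) (majorana n q * majorana n p)"
    by (simp add: one_smult_mat)
  also have "\<dots> = Zf n q * Zf n p"
    using hp hq unfolding Zf_in[OF hp] Zf_in[OF hq] by (intro kron_mult[of _ "2^n", symmetric]) auto
  finally show ?thesis .
next
  case False
  then consider "p = q" | "\<not> p < 2 * n" | "\<not> q < 2 * n" by auto
  then show ?thesis
  proof cases
    case 1
    then show ?thesis by (simp only:)
  next
    case 2
    then have "Zf n p = 1\<^sub>m (2 ^ n * 2 ^ n)" by (simp add: Zf_def)
    then show ?thesis by (simp add: left_mult_one_mat[OF Zf_carrier] right_mult_one_mat[OF Zf_carrier])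
  next
    case 3
    then have "Zf n q = 1\<^sub>m (2 ^ n * 2 ^ n)" by (simp add: Zf_def)
    then show ?thesis by (simp add: left_mult_one_mat[OF Zf_carrier] right_mult_one_mat[OF Zf_carrier])
  qed
qed

lemma cinv_Zf: "cinv (2 ^ n * 2 ^ n) (Zf n)"
proof
  fix p q
  show "Zf n p \<in> carrier_mat (2 ^ n * 2 ^ n) (2 ^ n * 2 ^ n)" by (rule Zf_carrier)
  show "Zf n p * Zf n q = Zf n q * Zf n p" by (rule Zf_comm)
  show "Zf n p * Zf n p = 1\<^sub>m (2 ^ n * 2 ^ n)" by (rule Zf_sq)
qed


lemma foldr_add: assumes "B \<in> carrier_mat (2 ^ n * 2 ^ n) (2 ^ n * 2 ^ n)" "m \<le> 2 * n"
  shows "foldr (\<lambda>p M. kron (majorana n p) (majorana n p) + M) [0..<m] B = Pm (2 ^ n * 2 ^ n) (Zf n) m + B"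
  using assms
proof (induction m arbitrary: B)
  case 0
  then show ?case by simp
next
  case (Suc m)
  interpret cinv "2 ^ n * 2 ^ n" "Zf n" by (rule cinv_Zf)
  have "foldr (\<lambda>p M. kron (majorana n p) (majorana n p) + M) [0..<Suc m] B
     = foldr (\<lambda>p M. kron (majorana n p) (majorana n p) + M) [0..<m] (Zf n m + B)"
    using Suc.prems by (simp add: Zf_def)
  also have "\<dots> = Pm (2 ^ n * 2 ^ n) (Zf n) m + (Zf n m + B)"
    using Suc by (intro Suc.IH) auto
  also have "\<dots> = Pm (2 ^ n * 2 ^ n) (Zf n) (Suc m) + B"
    using Suc.prems by (simp add: assoc_add_mat[of _ "2 ^ n * 2 ^ n" "2 ^ n * 2 ^ n"])
  finally show ?case .
qed

lemma four_pow: "(4::nat) ^ n = 2 ^ n * 2 ^ n" by (simp flip: power_mult_distrib)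

lemma Lambda_P: "Lambda n = Pm (2 ^ n * 2 ^ n) (Zf n) (2 * n)"
proof -
  interpret cinv "2 ^ n * 2 ^ n" "Zf n" by (rule cinv_Zf)
  show ?thesis unfolding Lambda_def four_pow
    by (subst foldr_add) auto
qed

lemma foldr_carrier: "(\<And>p. p \<in> set xs \<Longrightarrow> X p \<in> carrier_mat N N) \<Longrightarrow> A \<in> carrier_mat N N \<Longrightarrow>
  foldr (\<lambda>p M. X p * M) xs A \<in> carrier_mat N N"
  by (induction xs) (auto intro!: mult_carrier_mat[of _ N N])

lemma kron_foldr: "(\<And>p. p \<in> set xs \<Longrightarrow> X p \<in> carrier_mat N N) \<Longrightarrow> A \<in> carrier_mat N N \<Longrightarrow> B \<in> carrier_mat N N \<Longrightarrow>
  kron (foldr (\<lambda>p M. X p * M) xs A) (foldr (\<lambda>p M. X p * M) xs B) =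
  foldr (\<lambda>p M. kron (X p) (X p) * M) xs (kron A B)"
proof (induction xs)
  case Nil then show ?case by simp
next
  case (Cons a xs)
  have "kron (foldr (\<lambda>p M. X p * M) (a # xs) A) (foldr (\<lambda>p M. X p * M) (a # xs) B)
    = kron (X a * foldr (\<lambda>p M. X p * M) xs A) (X a * foldr (\<lambda>p M. X p * M) xs B)" by simp
  also have "\<dots> = kron (X a) (X a) * kron (foldr (\<lambda>p M. X p * M) xs A) (foldr (\<lambda>p M. X p * M) xs B)"
    using Cons.prems by (intro kron_mult[symmetric, of _ N] foldr_carrier) auto
  also have "\<dots> = foldr (\<lambda>p M. kron (X p) (X p) * M) (a # xs) (kron A B)"
    using Cons by simp
  finally show ?case .
qed

definition Tm :: "nat \<Rightarrow> nat \<Rightarrow> bool list \<Rightarrow> complex mat" where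
  "Tm n m a = foldr (\<lambda>p M. (if a ! p then Zf n p else 1\<^sub>m (2 ^ n * 2 ^ n)) * M) [0..<m] (1\<^sub>m (2 ^ n * 2 ^ n))"

lemma Tm_carrier[simp]: "Tm n m a \<in> carrier_mat (2 ^ n * 2 ^ n) (2 ^ n * 2 ^ n)"
  unfolding Tm_def by (rule foldr_carrier) auto

lemma Tm_dim[simp]: "dim_row (Tm n m a) = 2 ^ n * 2 ^ n" "dim_col (Tm n m a) = 2 ^ n * 2 ^ n"
  using Tm_carrier[of n m a] unfolding carrier_mat_def by auto

lemma Zf_dim[simp]: "dim_row (Zf n p) = 2 ^ n * 2 ^ n" "dim_col (Zf n p) = 2 ^ n * 2 ^ n"
  using Zf_carrier[of n p] unfolding carrier_mat_def by auto

lemma kron_cmono: "kron (cmono n a) (cmono n a) = Tm n (2 * n) a"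
proof -
  have "kron (cmono n a) (cmono n a) = foldr (\<lambda>p M. kron (if a ! p then majorana n p else 1\<^sub>m (2 ^ n))
      (if a ! p then majorana n p else 1\<^sub>m (2 ^ n)) * M) [0..<2 * n] (kron (1\<^sub>m (2 ^ n)) (1\<^sub>m (2 ^ n)))"
    unfolding cmono_def by (rule kron_foldr[of _ _ "2^n"]) auto
  also have "\<dots> = Tm n (2 * n) a"
    unfolding Tm_def kron_one
    by (rule foldr_cong) (auto simp: Zf_in kron_one)
  finally show ?thesis .
qed

lemma foldr_mult_right: "(\<And>p. p \<in> set xs \<Longrightarrow> Y p \<in> carrier_mat N N) \<Longrightarrow> (B :: complex mat) \<in> carrier_mat N N \<Longrightarrow>
  foldr (\<lambda>p M. Y p * M) xs B = foldr (\<lambda>p M. Y p * M) xs (1\<^sub>m N) * B"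
proof (induction xs)
  case Nil then show ?case by (simp add: left_mult_one_mat[of B N N])
next
  case (Cons a xs)
  have "foldr (\<lambda>p M. Y p * M) (a # xs) B = Y a * (foldr (\<lambda>p M. Y p * M) xs (1\<^sub>m N) * B)"
    using Cons by simp
  also have "\<dots> = (Y a * foldr (\<lambda>p M. Y p * M) xs (1\<^sub>m N)) * B"
    using Cons.prems by (intro assoc_mult_mat[symmetric, of _ N N _ N _ N] foldr_carrier) auto
  finally show ?case by simp
qed

lemma Tm_snoc: assumes "length a = m"
  shows "Tm n (Suc m) (a @ [b]) = Tm n m a * (if b then Zf n m else 1\<^sub>m (2 ^ n * 2 ^ n))"
proof -
  define X where "X = (if b then Zf n m else 1\<^sub>m (2 ^ n * 2 ^ n))"
  have X: "X \<in> carrier_mat (2 ^ n * 2 ^ n) (2 ^ n * 2 ^ n)" unfolding X_def by auto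
  define f where "f = (\<lambda>p M. (if (a @ [b]) ! p then Zf n p else 1\<^sub>m (2 ^ n * 2 ^ n)) * M)"
  have "Tm n (Suc m) (a @ [b]) = foldr f [0..<m] (f m (1\<^sub>m (2 ^ n * 2 ^ n)))"
    unfolding Tm_def f_def[symmetric] by simp
  also have "f m (1\<^sub>m (2 ^ n * 2 ^ n)) = X"
  proof -
    have bm: "(a @ [b]) ! m = b" using assms by auto
    show ?thesis unfolding f_def bm X_def using X[unfolded X_def] by (simp add: right_mult_one_mat)
  qed
  also have "foldr f [0..<m] X = foldr (\<lambda>p M. (if (a @ [b]) ! p then Zf n p else 1\<^sub>m (2 ^ n * 2 ^ n)) * M) [0..<m] X"
    unfolding f_def ..
  also have "\<dots> = foldr (\<lambda>p M. (if a ! p then Zf n p else 1\<^sub>m (2 ^ n * 2 ^ n)) * M) [0..<m] X"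
    by (rule foldr_cong) (auto simp: nth_append assms)
  also have "\<dots> = Tm n m a * X"
    unfolding Tm_def by (rule foldr_mult_right[OF _ X]) auto
  finally show ?thesis unfolding X_def .
qed

lemma hamming_snoc: "hamming (a @ [b]) = hamming a + (if b then 1 else 0)"
  by (simp add: hamming_def)

lemma set_split: "{a. length a = Suc m \<and> hamming a = k} =
  (\<lambda>a. a @ [False]) ` {a. length a = m \<and> hamming a = k} \<union> (\<lambda>a. a @ [True]) ` {a. length a = m \<and> Suc (hamming a) = k}"
proof (intro equalityI subsetI)
  fix x assume "x \<in> {a. length a = Suc m \<and> hamming a = k}"
  then have x: "length x = Suc m" "hamming x = k" by auto
  then obtain a b where ab: "x = a @ [b]" by (metis length_Suc_conv_rev)
  show "x \<in> (\<lambda>a. a @ [False]) ` {a. length a = m \<and> hamming a = k} \<union> (\<lambda>a. a @ [True]) ` {a. length a = m \<and> Suc (hamming a) = k}"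
    using x unfolding ab by (cases b) (auto simp: hamming_snoc)
qed (auto simp: hamming_snoc)

lemma sum_T: assumes "i < 2 ^ n * 2 ^ n" "j < 2 ^ n * 2 ^ n"
  shows "(\<Sum>a \<in> {a. length a = m \<and> hamming a = k}. Tm n m a $$ (i,j)) = Sm (2 ^ n * 2 ^ n) (Zf n) m k $$ (i,j)"
  using assms
proof (induction m arbitrary: k i j)
  case 0
  have "{a. length a = 0 \<and> hamming a = k} = (if k = 0 then {[]} else {})"
    by (auto simp: hamming_def)
  then show ?case using 0 by (simp add: Tm_def)
next
  case (Suc m)
  interpret cinv "2 ^ n * 2 ^ n" "Zf n" by (rule cinv_Zf)
  have ij: "i < 2 ^ n * 2 ^ n" "j < 2 ^ n * 2 ^ n" using Suc.prems by auto
  let ?A = "{a. length a = m \<and> hamming a = k}"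
  let ?B = "{a. length a = m \<and> Suc (hamming a) = k}"
  have fin: "finite {a :: bool list. length a = m}"
    by (rule finite_subset[OF _ finite_lists_length_eq[of "UNIV :: bool set" m]]) auto
  have finA: "finite ?A" "finite ?B" by (rule finite_subset[OF _ fin], auto)+
  have dis: "(\<lambda>a. a @ [False]) ` ?A \<inter> (\<lambda>a. a @ [True]) ` ?B = {}" by auto
  have "(\<Sum>a \<in> {a. length a = Suc m \<and> hamming a = k}. Tm n (Suc m) a $$ (i,j))
     = (\<Sum>a \<in> (\<lambda>a. a @ [False]) ` ?A. Tm n (Suc m) a $$ (i,j)) + (\<Sum>a \<in> (\<lambda>a. a @ [True]) ` ?B. Tm n (Suc m) a $$ (i,j))"
    unfolding set_split by (rule sum.union_disjoint) (use finA dis in auto)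
  also have "(\<Sum>a \<in> (\<lambda>a. a @ [False]) ` ?A. Tm n (Suc m) a $$ (i,j)) = (\<Sum>a \<in> ?A. Tm n (Suc m) (a @ [False]) $$ (i,j))"
    by (rule sum.reindex_cong[of "\<lambda>a. a @ [False]"]) (auto intro: inj_onI)
  also have "\<dots> = (\<Sum>a \<in> ?A. Tm n m a $$ (i,j))"
    by (rule sum.cong) (auto simp: Tm_snoc right_mult_one_mat[OF Tm_carrier])
  also have "\<dots> = Sm (2 ^ n * 2 ^ n) (Zf n) m k $$ (i,j)" using Suc ij by simp
  also have "(\<Sum>a \<in> (\<lambda>a. a @ [True]) ` ?B. Tm n (Suc m) a $$ (i,j)) = (\<Sum>a \<in> ?B. Tm n (Suc m) (a @ [True]) $$ (i,j))"
    by (rule sum.reindex_cong[of "\<lambda>a. a @ [True]"]) (auto intro: inj_onI)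
  also have "\<dots> = (\<Sum>a \<in> ?B. (Tm n m a * Zf n m) $$ (i,j))"
    by (rule sum.cong) (auto simp: Tm_snoc)
  finally have eq: "(\<Sum>a \<in> {a. length a = Suc m \<and> hamming a = k}. Tm n (Suc m) a $$ (i,j))
     = Sm (2 ^ n * 2 ^ n) (Zf n) m k $$ (i,j) + (\<Sum>a \<in> ?B. (Tm n m a * Zf n m) $$ (i,j))" .
  show ?case
  proof (cases k)
    case 0
    then have "?B = {}" by auto
    then show ?thesis using eq 0 by simp
  next
    case (Suc k')
    have B: "?B = {a. length a = m \<and> hamming a = k'}" using Suc by auto
    have "(\<Sum>a \<in> ?B. (Tm n m a * Zf n m) $$ (i,j)) = (\<Sum>a \<in> ?B. \<Sum>l\<in>{0..<2 ^ n * 2 ^ n}. Tm n m a $$ (i,l) * Zf n m $$ (l,j))"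
      using ij by (intro sum.cong) (auto simp: scalar_prod_def)
    also have "\<dots> = (\<Sum>l\<in>{0..<2 ^ n * 2 ^ n}. (\<Sum>a \<in> ?B. Tm n m a $$ (i,l)) * Zf n m $$ (l,j))"
      by (simp add: sum.swap[of _ ?B] sum_distrib_right)
    also have "\<dots> = (\<Sum>l\<in>{0..<2 ^ n * 2 ^ n}. Sm (2 ^ n * 2 ^ n) (Zf n) m k' $$ (i,l) * Zf n m $$ (l,j))"
      unfolding B using Suc.IH ij by (intro sum.cong) auto
    also have "\<dots> = (Sm (2 ^ n * 2 ^ n) (Zf n) m k' * Zf n m) $$ (i,j)"
      using ij by (simp add: scalar_prod_def)
    finally show ?thesis using eq Suc ij by simp
  qed
qed


lemma unit_col: assumes "(A :: complex mat) \<in> carrier_mat N N" "i < N" "j < N" shows "(A *\<^sub>v unit_vec N j) $ i = A $$ (i,j)"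
proof -
  have "(A *\<^sub>v unit_vec N j) $ i = (\<Sum>l\<in>{0..<N}. A $$ (i,l) * (if l = j then 1 else 0))"
    using assms by (auto simp: scalar_prod_def intro!: sum.cong)
  also have "\<dots> = (\<Sum>l\<in>{0..<N}. if l = j then A $$ (i,l) else 0)"
    by (rule sum.cong) auto
  also have "\<dots> = A $$ (i,j)" using assms by simp
  finally show ?thesis .
qed

lemma mtrace_mult: "A \<in> carrier_mat N N \<Longrightarrow> B \<in> carrier_mat N N \<Longrightarrow>
  mtrace (A * B) = (\<Sum>i<N. \<Sum>l<N. A $$ (i,l) * B $$ (l,i))"
  by (auto simp: mtrace_def scalar_prod_def atLeast0LessThan intro!: sum.cong)

lemma mtrace_comm: "A \<in> carrier_mat N N \<Longrightarrow> B \<in> carrier_mat N N \<Longrightarrow> mtrace (A * B) = mtrace (B * A)"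
proof -
  assume a: "A \<in> carrier_mat N N" "B \<in> carrier_mat N N"
  have "mtrace (A * B) = (\<Sum>i<N. \<Sum>l<N. A $$ (i,l) * B $$ (l,i))" using a by (rule mtrace_mult)
  also have "\<dots> = (\<Sum>l<N. \<Sum>i<N. A $$ (i,l) * B $$ (l,i))" by (rule sum.swap)
  also have "\<dots> = (\<Sum>l<N. \<Sum>i<N. B $$ (l,i) * A $$ (i,l))" by (simp only: mult.commute)
  also have "\<dots> = mtrace (B * A)" using a by (simp only: mtrace_mult[OF a(2) a(1)])
  finally show ?thesis .
qed

lemma mtrace_smult: "A \<in> carrier_mat N N \<Longrightarrow> mtrace (c \<cdot>\<^sub>m A) = c * mtrace A"
  by (auto simp: mtrace_def sum_distrib_left)

theorem proposition2:
  fixes n :: nat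
  shows "\<exists>F :: nat \<Rightarrow> real. \<forall>\<rho> :: complex mat.
     density_op (4 ^ n) \<rho> \<and> range_op (4 ^ n) \<rho> \<subseteq> kernel_op (4 ^ n) (Lambda n) \<longrightarrow>
     (\<forall>k \<le> 2 * n. (\<Sum>a \<in> {a. length a = 2 * n \<and> hamming a = k}. rho_coeff n \<rho> a a) = complex_of_real (F k))"
proof (intro exI[of _ "\<lambda>k. fco (2 * n) k / 2 ^ (2 * n)"] allI impI)
  fix \<rho> :: "complex mat" and k :: nat
  assume H: "density_op (4 ^ n) \<rho> \<and> range_op (4 ^ n) \<rho> \<subseteq> kernel_op (4 ^ n) (Lambda n)"
  interpret cinv "2 ^ n * 2 ^ n" "Zf n" by (rule cinv_Zf)
  have rc: "\<rho> \<in> carrier_mat (2 ^ n * 2 ^ n) (2 ^ n * 2 ^ n)" and tr: "mtrace \<rho> = 1"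
    using H unfolding density_op_def four_pow by auto
  have Lc: "Lambda n \<in> carrier_mat (2 ^ n * 2 ^ n) (2 ^ n * 2 ^ n)" unfolding Lambda_P by simp
  have L0: "Lambda n * \<rho> = 0\<^sub>m (2 ^ n * 2 ^ n) (2 ^ n * 2 ^ n)"
  proof (rule eq_matI)
    fix i j assume "i < dim_row (0\<^sub>m (2 ^ n * 2 ^ n) (2 ^ n * 2 ^ n) :: complex mat)"
      "j < dim_col (0\<^sub>m (2 ^ n * 2 ^ n) (2 ^ n * 2 ^ n) :: complex mat)"
    then have i: "i < 2 ^ n * 2 ^ n" and j: "j < 2 ^ n * 2 ^ n" by auto
    have "\<rho> *\<^sub>v unit_vec (2 ^ n * 2 ^ n) j \<in> range_op (4 ^ n) \<rho>"
      unfolding range_op_def four_pow by auto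
    then have "Lambda n *\<^sub>v (\<rho> *\<^sub>v unit_vec (2 ^ n * 2 ^ n) j) = 0\<^sub>v (dim_row (Lambda n))"
      using H unfolding kernel_op_def by auto
    then have "((Lambda n * \<rho>) *\<^sub>v unit_vec (2 ^ n * 2 ^ n) j) $ i = 0"
      using Lc rc i by (subst assoc_mult_mat_vec[of _ "2 ^ n * 2 ^ n" "2 ^ n * 2 ^ n" _ "2 ^ n * 2 ^ n"]) auto
    then show "(Lambda n * \<rho>) $$ (i, j) = 0\<^sub>m (2 ^ n * 2 ^ n) (2 ^ n * 2 ^ n) $$ (i, j)"
      using unit_col[of "Lambda n * \<rho>" "2 ^ n * 2 ^ n" i j] Lc rc i j by auto
  qed (use Lc rc in auto)
  have SK: "Sm (2 ^ n * 2 ^ n) (Zf n) (2 * n) k * \<rho> = complex_of_real (fco (2 * n) k) \<cdot>\<^sub>m \<rho>"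
    by (rule kernel_S[OF rc]) (use L0 Lambda_P in simp)
  let ?N = "2 ^ n * 2 ^ n"
  let ?A = "{a. length a = 2 * n \<and> hamming a = k}"
  have fin: "finite ?A"
    by (rule finite_subset[OF _ finite_lists_length_eq[of "UNIV :: bool set" "2 * n"]]) auto
  have "(\<Sum>a \<in> ?A. rho_coeff n \<rho> a a) = (\<Sum>a \<in> ?A. mtrace (\<rho> * Tm n (2 * n) a)) / 2 ^ (2 * n)"
    unfolding rho_coeff_def kron_cmono by (simp add: sum_divide_distrib)
  also have "(\<Sum>a \<in> ?A. mtrace (\<rho> * Tm n (2 * n) a)) =
      (\<Sum>a \<in> ?A. \<Sum>i<?N. \<Sum>l<?N. \<rho> $$ (i,l) * Tm n (2 * n) a $$ (l,i))"
    using rc by (intro sum.cong refl mtrace_mult) auto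
  also have "\<dots> = (\<Sum>i<?N. \<Sum>l<?N. \<rho> $$ (i,l) * (\<Sum>a \<in> ?A. Tm n (2 * n) a $$ (l,i)))"
    by (simp add: sum.swap[of _ ?A] sum_distrib_left)
  also have "\<dots> = (\<Sum>i<?N. \<Sum>l<?N. \<rho> $$ (i,l) * Sm ?N (Zf n) (2 * n) k $$ (l,i))"
    by (intro sum.cong refl) (simp add: sum_T)
  also have "\<dots> = mtrace (\<rho> * Sm ?N (Zf n) (2 * n) k)"
    using rc by (simp add: mtrace_mult)
  also have "\<dots> = mtrace (Sm ?N (Zf n) (2 * n) k * \<rho>)"
    using rc by (intro mtrace_comm) auto
  also have "\<dots> = complex_of_real (fco (2 * n) k)"
    unfolding SK using rc tr by (simp add: mtrace_smult)
  finally show "(\<Sum>a \<in> ?A. rho_coeff n \<rho> a a) = complex_of_real (fco (2 * n) k / 2 ^ (2 * n))"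
    by simp
qed

end
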